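(* Let $r$ be a rational number with $0<r<1$ and $r\neq1/p$ for every integer $p\ge2$, written $r=[m_1,\dots,m_k]$ with $k\ge2$, $m_i\in\mathbb{Z}_{>0}$, $m_k\ge2$, and let $(S_1,S_2,S_1,S_2)$ be the decomposition of $CS(r)$ described in the context; put $m=m_1$. (1) If $k$ is even and $s$ is a rational number with $[m_1,\dots,m_{k-1},m_k-1]<s\le[m_1,\dots,m_{k-1},m_k-1,2]$, then $CS(s)$ contains $(m+1,S_{2e},S_1,S_2,S_1,S_{2b},m+1)$ as a subsequence, where $S_{2e},S_{2b}$ are defined by $(m,S_{2e})=(S_{2b},m)=S_2$. (2) If $k$ is odd and $s$ is a rational number with $[m_1,\dots,m_{k-1},m_k-1,2]\le s<[m_1,\dots,m_{k-1},m_k-1]$, then $CS(s)$ contains $(m,S_{1e},S_2,S_1,S_2,S_{1b},m)$ as a subsequence, where $S_{1e},S_{1b}$ are defined by $(m+1,S_{1e})=(S_{1b},m+1)=S_1$.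
   Context: Continued fractions: $[m_1,\dots,m_k]=1/(m_1+1/(m_2+\cdots+1/m_k))$. For $s\in\mathbb{Q}\cup\{\infty\}$, $u_s$ is the cyclically reduced, cyclically alternating word in the free group $F(a,b)$ representing the simple loop of slope $s$ on the 4-punctured 2-bridge sphere in the upper tangle complement (well defined up to cyclic permutation and inversion). For a cyclically reduced cyclic word $(w)$, decompose it cyclically into maximal subwords alternately positive (all exponents $+1$) and negative (all exponents $-1$); $CS(w)$ is the cyclic sequence of their lengths, and $CS(s):=CS(u_s)$. $CS(r)$ consists of $m$ and $m+1$ and has a decomposition $CS(r)=((S_1,S_2,S_1,S_2))$ in which each $S_i$ is symmetric (equal to its reverse) and occurs only twice in $CS(r)$, $S_1$ begins and ends with $m+1$, and $S_2$ begins and ends with $m$; this is the decomposition meant. "Contains as a subsequence" means occurs as a block of consecutive terms of the cyclic sequence. *)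

theory Defs
  imports Complex_Main "HOL-Library.Sublist"
begin

fun cf :: "nat list \<Rightarrow> rat" where
  "cf [] = 0"
| "cf (m # ms) = 1 / (of_nat m + cf ms)"

datatype gen = GA | GB

text \<open>For s = q/p (p > 0, gcd(p,q) = 1) the word u_s is
  a^(e_1) b^(e_2) a^(e_3) ... a^(e_(2p-1)) b^(e_(2p)),  e_i = (-1)^floor((i-1)q/p)
  (Lee--Sakuma's formula).\<close>
definition u_word :: "rat \<Rightarrow> (gen \<times> int) list" where
  "u_word s = (let (q, p) = quotient_of s in
     map (\<lambda>j. (if even j then GA else GB,
                if even ((int j * q) div p) then 1 else -1)) [0..<2 * nat p])"

function runs :: "'a list \<Rightarrow> nat list" where
  "runs [] = []"
| "runs (x # xs) = length (takeWhile (\<lambda>y. y = x) (x # xs)) # runs (dropWhile (\<lambda>y. y = x) xs)"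
  by pat_completeness auto
termination
  by (relation "measure length") (auto simp: le_imp_less_Suc length_dropWhile_le)

text \<open>Cyclic sequence of lengths of maximal cyclic runs of equal exponent sign
  (positive / negative subwords); returned as a list representing it up to rotation.\<close>
definition CS_signs :: "int list \<Rightarrow> nat list" where
  "CS_signs e = (if \<exists>n<length e. e ! n \<noteq> e ! ((n + length e - 1) mod length e)
     then runs (rotate (LEAST n. n < length e \<and> e ! n \<noteq> e ! ((n + length e - 1) mod length e)) e)
     else [length e])"

definition CS_word :: "(gen \<times> int) list \<Rightarrow> nat list" where
  "CS_word w = CS_signs (map snd w)"

definition CS :: "rat \<Rightarrow> nat list" where
  "CS s = CS_word (u_word s)"

definition cyc_contains :: "nat list \<Rightarrow> nat list \<Rightarrow> bool" where
  "cyc_contains C T \<longleftrightarrow> length T \<le> length C \<and> (\<exists>n. prefix T (rotate n C))"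

definition cyc_occ :: "nat list \<Rightarrow> nat list \<Rightarrow> nat" where
  "cyc_occ C T = card {n. n < length C \<and> prefix T (rotate n C)}"

definition CS_decomp :: "nat list \<Rightarrow> nat \<Rightarrow> nat list \<Rightarrow> nat list \<Rightarrow> bool" where
  "CS_decomp C m S1 S2 \<longleftrightarrow>
     (\<exists>n. rotate n C = S1 @ S2 @ S1 @ S2) \<and>
     rev S1 = S1 \<and> rev S2 = S2 \<and>
     cyc_occ C S1 = 2 \<and> cyc_occ C S2 = 2 \<and>
     S1 \<noteq> [] \<and> hd S1 = m + 1 \<and> last S1 = m + 1 \<and>
     S2 \<noteq> [] \<and> hd S2 = m \<and> last S2 = m"

end

theory Submission
  imports Defs
begin

definition cl :: "int \<Rightarrow> int \<Rightarrow> int" where "cl a b = - ((- a) div b)"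

lemma div_eqI_int: "0 < (p::int) \<Longrightarrow> K*p \<le> x \<Longrightarrow> x < (K+1)*p \<Longrightarrow> x div p = K"
  using int_div_pos_eq[of x p K "x - p*K"] by (simp add: algebra_simps)

lemma cl_bounds: assumes "b > 0" shows "(cl a b - 1) * b < a" "a \<le> cl a b * b"
proof -
  have e: "-a = b * ((-a) div b) + (-a) mod b" by simp
  have "0 \<le> (-a) mod b" "(-a) mod b < b" using assms by auto
  moreover have "(cl a b - 1) * b = - (b * ((-a) div b)) - b" "cl a b * b = - (b * ((-a) div b))"
    unfolding cl_def by (simp_all add: algebra_simps)
  ultimately show "(cl a b - 1) * b < a" "a \<le> cl a b * b" using e by linarith+
qed

lemma cl_unique: assumes "b > 0" "(n-1)*b < a" "a \<le> n*b" shows "cl a b = n"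
proof -
  have "-a = b * (-n) + (n*b - a)" by (simp add: algebra_simps)
  then have "(-a) div b = -n" using assms int_div_pos_eq[of "-a" b "-n" "n*b - a"] by (auto simp: algebra_simps)
  then show ?thesis unfolding cl_def by simp
qed

lemma cl_le_iff: assumes "b > 0" shows "(cl a b \<le> j) = (a \<le> j*b)"
proof
  assume "cl a b \<le> j" then show "a \<le> j*b" using cl_bounds(2)[OF assms, of a] assms
    by (meson mult_right_mono order_trans less_imp_le)
next
  assume h: "a \<le> j*b"
  have "(cl a b - 1) * b < j * b" using cl_bounds(1)[OF assms, of a] h by linarith
  then have "cl a b - 1 < j" using assms by (simp add: mult_less_cancel_right)
  then show "cl a b \<le> j" by simp
qed

lemma cl_add: assumes "b > 0" shows "cl (a + c*b) b = cl a b + c"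
  using cl_bounds[OF assms, of a] assms
  by (intro cl_unique) (auto simp: algebra_simps)

lemma cl_mult: assumes "b > 0" shows "cl (c*b) b = c"
  using cl_add[OF assms, of 0 c] assms by (simp add: cl_def)

definition cs :: "int \<Rightarrow> int \<Rightarrow> int \<Rightarrow> int" where
  "cs p q t = cl ((t+1)*p) q - cl (t*p) q"

lemma cs_period: assumes "q > 0" shows "cs p q (t + k*q) = cs p q t"
proof -
  have "(t + k*q + 1) * p = (t+1)*p + (k*p)*q" "(t + k*q) * p = t*p + (k*p)*q"
    by (simp_all add: algebra_simps)
  then show ?thesis unfolding cs_def using cl_add[OF assms] by simp
qed

lemma cs_mod: assumes "q > 0" shows "cs p q (t mod (2*q)) = cs p q t"
proof -
  have "t mod (2*q) = t - (t div (2*q)) * (2*q)" by (simp add: minus_div_mult_eq_mod)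
  also have "\<dots> = t + (- (2 * (t div (2*q))))*q" by (simp add: algebra_simps)
  finally have "t mod (2*q) = t + (- (2 * (t div (2*q))))*q" .
  then show ?thesis using cs_period[OF assms, of p t "-(2 * (t div (2*q)))"] by simp
qed

lemma cs_pos: assumes "0 < q" "q < p" shows "cs p q t \<ge> 1"
proof -
  have a: "(cl (t*p) q - 1) * q < t*p" using cl_bounds(1)[OF assms(1)] .
  have b: "(t+1)*p \<le> cl ((t+1)*p) q * q" using cl_bounds(2)[OF assms(1)] .
  have a': "cl (t*p) q * q < t*p + q" using a by (simp add: algebra_simps)
  have b': "t*p + p \<le> cl ((t+1)*p) q * q" using b by (simp add: algebra_simps)
  have "cl (t*p) q * q < cl ((t+1)*p) q * q" using a' b' assms by linarith
  then have "cl (t*p) q < cl ((t+1)*p) q" using assms by (simp add: mult_less_cancel_right)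
  then show ?thesis unfolding cs_def by simp
qed


lemma runs_rep: assumes "k > 0" "rest = [] \<or> hd rest \<noteq> y"
  shows "runs (replicate k y @ rest) = k # runs rest"
proof -
  obtain k' where k: "k = Suc k'" using assms(1) by (cases k) auto
  have t0: "takeWhile (\<lambda>z. z = y) rest = []" "dropWhile (\<lambda>z. z = y) rest = rest"
    using assms(2) by (cases rest; auto)+
  have tw: "takeWhile (\<lambda>z. z = y) (replicate k' y @ rest) = replicate k' y"
    using t0 by (induction k') auto
  have dw: "dropWhile (\<lambda>z. z = y) (replicate k' y @ rest) = rest"
    using t0 by (induction k') auto
  show ?thesis using tw dw by (simp add: k)
qed

lemma runs_concat:
  assumes "\<And>t. n t > 0" "\<And>t. x t \<noteq> x (Suc t)"
  shows "runs (concat (map (\<lambda>t. replicate (n t) (x t)) [a..<b])) = map n [a..<b]"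
proof (induction "b - a" arbitrary: a)
  case 0 then show ?case by simp
next
  case (Suc d)
  then have ab: "a < b" by simp
  have up: "[a..<b] = a # [Suc a..<b]" using ab by (simp add: upt_conv_Cons)
  have IH: "runs (concat (map (\<lambda>t. replicate (n t) (x t)) [Suc a..<b])) = map n [Suc a..<b]"
    using Suc by simp
  have hd: "concat (map (\<lambda>t. replicate (n t) (x t)) [Suc a..<b]) = [] \<or>
            hd (concat (map (\<lambda>t. replicate (n t) (x t)) [Suc a..<b])) \<noteq> x a"
  proof (cases "Suc a < b")
    case True
    then have "[Suc a..<b] = Suc a # [Suc (Suc a)..<b]" by (simp add: upt_conv_Cons)
    moreover obtain k where "n (Suc a) = Suc k" using assms(1) by (metis gr0_implies_Suc)
    ultimately show ?thesis using assms(2)[of a] by (auto)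
  next
    case False then show ?thesis by simp
  qed
  show ?case using runs_rep[OF assms(1) hd] IH by (simp add: up)
qed

lemma CS_formula:
  assumes qs: "quotient_of s = (q, p)" and s0: "0 < s" and s1: "s < 1"
  shows "CS s = map (\<lambda>t. nat (cs p q (int t))) [0..<2 * nat q]"
proof -
  have p0: "p > 0" using quotient_of_denom_pos[OF qs] .
  have sq: "s = of_int q / of_int p" using quotient_of_div[OF qs] .
  have q0: "q > 0" using s0 p0 by (simp add: sq zero_less_divide_iff)
  have qp: "q < p" using s1 p0 by (simp add: sq divide_less_eq)
  define g where "g = (\<lambda>j::nat. if even (int j * q div p) then (1::int) else -1)"
  define sg where "sg = (\<lambda>t::nat. if even t then (1::int) else -1)"
  define N where "N = (\<lambda>t::nat. nat (cl (int t * p) q))"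
  have nn: "cl (int t * p) q \<ge> 0" for t
    using cl_le_iff[OF q0, of "int t * p" "-1"] p0 q0
    by (smt (verit) mult_nonneg_nonneg of_nat_0_le_iff)
  have iN: "int (N t) = cl (int t * p) q" for t using nn[of t] by (simp add: N_def)
  have Nmono: "N t \<le> N (Suc t)" for t
    using cs_pos[OF q0 qp, of "int t"] cl_le_iff[OF q0, of "int t * p" 0] p0
    unfolding N_def cs_def by (simp add: algebra_simps)
  have Ndiff: "N (Suc t) - N t = nat (cs p q (int t))" for t
  proof -
    have "cl (int t * p) q \<ge> 0" using cl_le_iff[OF q0, of "int t * p" "-1"] p0 q0
      by (smt (verit) mult_nonneg_nonneg of_nat_0_le_iff)
    then show ?thesis unfolding N_def cs_def by (simp add: algebra_simps nat_diff_distrib)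
  qed
  have blk: "map g [N t..<N (Suc t)] = replicate (N (Suc t) - N t) (sg t)" for t
  proof (rule nth_equalityI)
    fix i assume "i < length (map g [N t..<N (Suc t)])"
    then have i: "N t + i < N (Suc t)" by simp
    let ?j = "N t + i"
    have c1: "cl (int t * p) q \<le> int ?j" using iN[of t] by simp
    have lo: "int t * p \<le> int ?j * q" using c1 cl_le_iff[OF q0] by blast
    have c2: "\<not> cl (int (Suc t) * p) q \<le> int ?j" using i iN[of "Suc t"] by linarith
    have hi: "int ?j * q < (int t + 1) * p" using c2 cl_le_iff[OF q0] by (simp add: algebra_simps)
    have "int ?j * q div p = int t" using div_eqI_int[OF p0 lo hi] .
    then show "map g [N t..<N (Suc t)] ! i = replicate (N (Suc t) - N t) (sg t) ! i"
      using i by (simp add: g_def sg_def)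
  qed simp
  have E: "map g [0..<N K] = concat (map (\<lambda>t. replicate (N (Suc t) - N t) (sg t)) [0..<K])" for K
  proof (induction K)
    case 0 then show ?case by (simp add: N_def cl_def)
  next
    case (Suc K)
    have "[0..<N (Suc K)] = [0..<N K] @ [N K..<N (Suc K)]"
      using Nmono[of K] by (metis le0 upt_add_eq_append le_add_diff_inverse)
    then show ?case using Suc blk[of K] by simp
  qed
  have N2: "N (2 * nat q) = 2 * nat p"
    using cl_mult[OF q0, of "2*p"] q0 p0 unfolding N_def by (simp add: algebra_simps)
  have Elist: "map snd (u_word s) = map g [0..<2 * nat p]"
    unfolding u_word_def qs g_def by simp
  have runsE: "runs (map g [0..<2 * nat p]) = map (\<lambda>t. nat (cs p q (int t))) [0..<2 * nat q]"
  proof -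
    have "runs (map g [0..<2 * nat p]) = runs (concat (map (\<lambda>t. replicate (N (Suc t) - N t) (sg t)) [0..<2 * nat q]))"
      using E[of "2 * nat q"] N2 by simp
    also have "\<dots> = map (\<lambda>t. N (Suc t) - N t) [0..<2 * nat q]"
      by (rule runs_concat) (use Ndiff cs_pos[OF q0 qp] in \<open>auto simp: sg_def intro: order.strict_trans2[OF zero_less_one]\<close>)
    finally show ?thesis using Ndiff by simp
  qed
  let ?e = "map g [0..<2 * nat p]"
  have len: "length ?e = 2 * nat p" by simp
  have e0: "?e ! 0 = 1" using p0 by (simp add: g_def)
  have dl: "int (2 * nat p - 1) * q div p = 2*q - 1"
  proof -
    have "int (2 * nat p - 1) = 2*p - 1" using p0 by simp
    then show ?thesis using p0 q0 qp
      by (simp, intro div_eqI_int) (auto simp: algebra_simps)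
  qed
  have elast: "?e ! (2 * nat p - 1) = -1" using p0 dl by (simp add: g_def)
  have ex: "\<exists>n<length ?e. ?e ! n \<noteq> ?e ! ((n + length ?e - 1) mod length ?e)"
    using e0 elast p0 by (intro exI[of _ 0]) (simp add: len)
  have least: "(LEAST n. n < length ?e \<and> ?e ! n \<noteq> ?e ! ((n + length ?e - 1) mod length ?e)) = 0"
    using e0 elast p0 by (intro Least_eq_0) (simp add: len)
  show ?thesis unfolding CS_def CS_word_def Elist CS_signs_def using ex least runsE by simp
qed


fun cfr :: "nat list \<Rightarrow> rat \<Rightarrow> rat" where
  "cfr [] y = y"
| "cfr (m # xs) y = 1 / (of_nat m + cfr xs y)"

lemma cf_append: "cf (xs @ ys) = cfr xs (cf ys)"
  by (induction xs) auto

lemma cfr_mat: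
  assumes "\<forall>x\<in>set xs. x > 0"
  shows "\<exists>a b c d::int. 0 \<le> a \<and> 0 \<le> b \<and> 0 \<le> c \<and> 1 \<le> d \<and> a*d - b*c = (-1)^length xs \<and>
     (xs \<noteq> [] \<longrightarrow> 1 \<le> b) \<and>
     (\<forall>y::rat. y \<ge> 0 \<longrightarrow> cfr xs y = (of_int a * y + of_int b)/(of_int c * y + of_int d))"
  using assms
proof (induction xs)
  case Nil
  show ?case by (intro exI[of _ 1] exI[of _ 0] exI[of _ 0] exI[of _ 1]) simp
next
  case (Cons m xs)
  then obtain a b c d :: int where h: "0 \<le> a" "0 \<le> b" "0 \<le> c" "1 \<le> d" "a*d - b*c = (-1)^length xs"
    "\<forall>y::rat. y \<ge> 0 \<longrightarrow> cfr xs y = (of_int a * y + of_int b)/(of_int c * y + of_int d)" by auto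
  have m: "m \<ge> 1" using Cons.prems by auto
  show ?case
  proof -
    have D: "c*(int m * d + b) - d*(int m * c + a) = (-1)^length (m#xs)"
      using h(5) by (simp add: algebra_simps)
    have C: "0 \<le> int m * c + a" using h by simp
    have B: "1 \<le> int m * d + b" proof -
      have "int m * d \<ge> 1 * 1" using m h(4) by (intro mult_mono) auto
      then show ?thesis using h(2) by linarith
    qed
    have F: "cfr (m#xs) y = (of_int c * y + of_int d) / (of_int (int m * c + a) * y + of_int (int m * d + b))" if y: "y \<ge> 0" for y
    proof -
    have "of_int c * y \<ge> (0::rat)" using h(3) y by simp
    moreover have "of_int d \<ge> (1::rat)" using h(4) by simp
    ultimately have pos: "of_int c * y + of_int d > (0::rat)" by linarith
    have "of_int a * y \<ge> (0::rat)" "of_int b \<ge> (0::rat)" using h(1,2) y by simp_all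
    then have pos2: "of_int a * y + of_int b \<ge> (0::rat)" by linarith
    have "cfr xs y = (of_int a * y + of_int b)/(of_int c * y + of_int d)" using h(6) y by blast
    then have "cfr (m#xs) y = 1 / (of_nat m + (of_int a * y + of_int b)/(of_int c * y + of_int d))"
      by simp
    also have "\<dots> = (of_int c * y + of_int d) / (of_nat m * (of_int c * y + of_int d) + (of_int a * y + of_int b))"
      using pos pos2 by (simp add: field_simps)
    also have "\<dots> = (of_int c * y + of_int d) / (of_int (int m * c + a) * y + of_int (int m * d + b))"
      by (simp add: algebra_simps)
    finally show ?thesis .
    qed
    show ?thesis
      by (intro exI[of _ c] exI[of _ d] exI[of _ "int m * c + a"] exI[of _ "int m * d + b"])
         (use h(1-4) D B F in \<open>simp add: Cons.prems\<close>)
  qed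
qed

lemma cf_pos_le1: "ys \<noteq> [] \<Longrightarrow> \<forall>x\<in>set ys. x > 0 \<Longrightarrow> 0 < cf ys \<and> cf ys \<le> 1"
proof (induction ys)
  case Nil then show ?case by simp
next
  case (Cons y ys)
  have "0 \<le> cf ys" using Cons by (cases ys) auto
  moreover have "y \<ge> 1" using Cons.prems by auto
  ultimately show ?case by (simp add: divide_le_eq)
qed

lemma cf_lt1: assumes "ys \<noteq> []" "\<forall>x\<in>set ys. x > 0" "length ys \<ge> 2 \<or> hd ys \<ge> 2"
  shows "cf ys < 1"
proof (cases ys)
  case Nil then show ?thesis using assms by simp
next
  case (Cons y ys')
  have y1: "y \<ge> 1" using assms Cons by auto
  show ?thesis
  proof (cases "ys' = []")
    case True
    then have "y \<ge> 2" using assms Cons by auto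
    then show ?thesis using Cons True by (simp add: divide_less_eq)
  next
    case False
    then have "cf ys' > 0" using cf_pos_le1[of ys'] assms Cons by auto
    then show ?thesis using Cons y1 by (simp add: divide_less_eq)
  qed
qed


lemma coprime_from_bezout: "x * Q + y * P = (1::int) \<Longrightarrow> coprime Q P"
  by (metis add_minus_cancel coprime_add_one_left coprime_commute
    coprime_mult_right_iff mult.commute mult_minus_right)

lemma half_cancel: "(x/2)/(y/2) = (x/y::rat)"
  by (cases "y = 0") (simp_all add: field_simps)

lemma cf_param:
  assumes len: "length ms \<ge> 2" and pos: "\<forall>x\<in>set ms. x > 0" and lst: "last ms \<ge> 2"
  obtains Q0 P0 u v :: int where
    "cf ms = of_int Q0 / of_int P0" "P0 > 0" "Q0 > 0" "coprime Q0 P0"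
    "0 < u" "u < Q0" "u*P0 = 1 + v*Q0"
    "int (hd ms) * Q0 < P0" "P0 < (int (hd ms) + 1) * Q0"
    "even (length ms) \<Longrightarrow> cf (butlast ms @ [last ms - 1]) = of_int (Q0-u) / of_int (P0-v) \<and>
        cf (butlast ms @ [last ms - 1, 2]) = of_int (2*Q0-u) / of_int (2*P0-v)"
    "odd (length ms) \<Longrightarrow> cf (butlast ms @ [last ms - 1]) = of_int u / of_int v \<and>
        cf (butlast ms @ [last ms - 1, 2]) = of_int (Q0+u) / of_int (P0+v)"
proof -
  define xs where "xs = butlast ms"
  define z where "z = last ms"
  have ms: "ms = xs @ [z]" using len unfolding xs_def z_def
    by (metis append_butlast_last_id list.size(3) not_numeral_le_zero)
  have xsne: "xs \<noteq> []" using len ms by auto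
  have lxs: "length xs = length ms - 1" using ms by simp
  have xpos: "\<forall>x\<in>set xs. x > 0" using pos ms by auto
  obtain a b c d :: int where h: "0 \<le> a" "0 \<le> b" "0 \<le> c" "1 \<le> d" "a*d - b*c = (-1)^length xs"
    "1 \<le> b" "\<forall>y::rat. y \<ge> 0 \<longrightarrow> cfr xs y = (of_int a * y + of_int b)/(of_int c * y + of_int d)"
    using cfr_mat[OF xpos] xsne by blast
  have W: "cfr xs (1/w) = (of_int a + of_int b * w) / (of_int c + of_int d * w)" if w: "w > 0" for w :: rat
  proof -
    have "cfr xs (1/w) = (of_int a * (1/w) + of_int b)/(of_int c * (1/w) + of_int d)"
      using h(7) w by simp
    also have "\<dots> = (of_int a + of_int b * w) / (of_int c + of_int d * w)"
      using w by (simp add: add.commute add_num_frac)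
    finally show ?thesis .
  qed
  have z2: "z \<ge> 2" using lst z_def by simp
  define Q0 where "Q0 = a + b * int z"
  define P0 where "P0 = c + d * int z"
  have z2': "int z \<ge> 2" using z2 by simp
  have "d * int z \<ge> 1 * 2" using h(4) z2' by (intro mult_mono) auto
  then have P0pos: "P0 > 0" unfolding P0_def using h(3) by linarith
  have "b * int z \<ge> b * 2" using h(2) z2' by (intro mult_left_mono) auto
  then have Q0ge: "Q0 \<ge> 2 * b" unfolding Q0_def using h(1) by linarith
  have Q0pos: "Q0 > 0" using Q0ge h by simp
  have cfms: "cf ms = of_int Q0 / of_int P0"
  proof -
    have "cf ms = cfr xs (1 / of_nat z)" unfolding ms cf_append by simp
    also have "\<dots> = of_int Q0 / of_int P0" using W[of "of_nat z"] z2 unfolding Q0_def P0_def by simp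
    finally show ?thesis .
  qed
  have det: "b * P0 - d * Q0 = - ((-1)^length xs)" using h(5) unfolding P0_def Q0_def
    by (simp add: algebra_simps)
  have cop: "coprime Q0 P0"
  proof (cases "even (length xs)")
    case True then have "(-d) * Q0 + b * P0 = -1" using det by simp
    then have "d * Q0 + (-b) * P0 = 1" by simp
    then show ?thesis by (rule coprime_from_bezout)
  next
    case False then have "(-d) * Q0 + b * P0 = 1" using det by simp
    then show ?thesis by (rule coprime_from_bezout)
  qed
  obtain m ys where msc: "ms = m # ys" using len by (cases ms) auto
  have hdm: "hd ms = m" using msc by simp
  have ysne: "ys \<noteq> []" using len msc by auto
  have ypos: "\<forall>x\<in>set ys. x > 0" using pos msc by auto
  have ycond: "length ys \<ge> 2 \<or> hd ys \<ge> 2"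
  proof (cases "length ys \<ge> 2")
    case False then have "length ys = 1" using ysne by (metis One_nat_def Suc_1 length_0_conv not_less_eq_eq antisym_conv2 less_Suc0 not_less)
    then obtain y where "ys = [y]" by (metis One_nat_def length_0_conv length_Suc_conv)
    then show ?thesis using lst msc by simp
  qed simp
  have y01: "0 < cf ys" "cf ys < 1" using cf_pos_le1[OF ysne ypos] cf_lt1[OF ysne ypos ycond] by auto
  have inv: "of_int P0 / of_int Q0 = of_nat m + cf ys"
  proof -
    have "cf ms = 1 / (of_nat m + cf ys)" using msc by simp
    then have "of_int Q0 / of_int P0 = 1 / (of_nat m + cf ys)" using cfms by simp
    moreover have "of_int P0 / of_int Q0 = inverse (of_int Q0 / (of_int P0::rat))" by simp
    ultimately show ?thesis by (simp add: inverse_eq_divide)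
  qed
  have mlo: "int m * Q0 < P0"
  proof -
    have "(of_nat m :: rat) < of_int P0 / of_int Q0" using inv y01 by simp
    then have "(of_nat m :: rat) * of_int Q0 < of_int P0" using Q0pos by (simp add: less_divide_eq)
    then have "rat_of_int (int m * Q0) < rat_of_int P0" by simp
    then show ?thesis by (simp only: of_int_less_iff)
  qed
  have mhi: "P0 < (int m + 1) * Q0"
  proof -
    have "of_int P0 / of_int Q0 < (of_nat m + 1 :: rat)" using inv y01 by simp
    then have "of_int P0 < (of_nat m + 1 :: rat) * of_int Q0" using Q0pos by (simp add: divide_less_eq)
    then have "rat_of_int P0 < rat_of_int ((int m + 1) * Q0)" by simp
    then show ?thesis by (simp only: of_int_less_iff)
  qed
  have z1: "cf (butlast ms @ [last ms - 1]) = of_int (Q0 - b) / of_int (P0 - d)"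
  proof -
    have "cf (butlast ms @ [last ms - 1]) = cfr xs (1 / (of_nat z - 1))"
      unfolding xs_def[symmetric] z_def[symmetric] cf_append using z2 by (simp add: of_nat_diff)
    also have "\<dots> = of_int (Q0 - b) / of_int (P0 - d)"
      using W[of "of_nat z - 1"] z2 unfolding Q0_def P0_def by (simp add: algebra_simps)
    finally show ?thesis .
  qed
  have z12: "cf (butlast ms @ [last ms - 1, 2]) = of_int (2*Q0 - b) / of_int (2*P0 - d)"
  proof -
    have "cf [z - 1, 2] = 1 / ((of_nat z - 1) + 1/2)" using z2 by (simp add: of_nat_diff)
    then have "cf (butlast ms @ [last ms - 1, 2]) = cfr xs (1 / ((of_nat z - 1) + 1/2))"
      unfolding xs_def[symmetric] z_def[symmetric] cf_append by simp
    also have "\<dots> = (of_int a + of_int b * ((of_nat z - 1) + 1/2)) / (of_int c + of_int d * ((of_nat z - 1) + 1/2))"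
      using W[of "(of_nat z - 1) + 1/2"] z2 by simp
    also have "(of_int a + of_int b * ((of_nat z - 1) + 1/2)) = (of_int (2*Q0 - b) / 2 :: rat)"
      unfolding Q0_def by (simp add: field_simps)
    also have "(of_int c + of_int d * ((of_nat z - 1) + 1/2)) = (of_int (2*P0 - d) / 2 :: rat)"
      unfolding P0_def by (simp add: field_simps)
    also have "(of_int (2*Q0 - b) / 2) / (of_int (2*P0 - d) / 2) = (of_int (2*Q0 - b) / of_int (2*P0 - d) :: rat)"
      by (rule half_cancel)
    finally show ?thesis .
  qed
  show ?thesis
  proof (cases "even (length ms)")
    case True
    then have "odd (length xs)" using lxs len True by presburger
    then have "b * P0 - d * Q0 = 1" using det by simp
    then have uv: "b * P0 = 1 + d * Q0" by simp
    have "b < Q0" using Q0ge h by simp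
    have b1: "0 < b" using h(6) by simp
    show ?thesis
      apply (rule that[of Q0 P0 b d])
      using cfms P0pos Q0pos cop b1 uv \<open>b < Q0\<close> mlo mhi apply (simp_all only: hdm)
      using z1 z12 True by simp_all
  next
    case False
    then have "even (length xs)" using lxs len False by presburger
    then have "b * P0 - d * Q0 = -1" using det by simp
    then have uv: "(Q0 - b) * P0 = 1 + (P0 - d) * Q0" by (simp add: algebra_simps)
    have "b < Q0" using Q0ge h by simp
    have e2: "Q0 + (Q0 - b) = 2*Q0 - b" "P0 + (P0 - d) = 2*P0 - d" by simp_all
    have u1: "0 < Q0 - b" using \<open>b < Q0\<close> by simp
    have u2: "Q0 - b < Q0" using h(6) by simp
    show ?thesis
      apply (rule that[of Q0 P0 "Q0 - b" "P0 - d"])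
      using cfms P0pos Q0pos cop u1 u2 uv mlo mhi apply (simp_all only: hdm)
      using z1 z12 False by (simp_all only: e2 simp_thms)
  qed
qed


lemma cl_succ: assumes "b > 0" "\<not> b dvd a" shows "cl (a+1) b = cl a b"
proof -
  have h1: "(cl a b - 1) * b < a" "a \<le> cl a b * b" using cl_bounds[OF assms(1)] by auto
  have "a \<noteq> cl a b * b" using assms(2) by (metis dvd_triv_right)
  then have "a + 1 \<le> cl a b * b" using h1 by linarith
  then show ?thesis using h1 assms by (intro cl_unique) auto
qed

lemma D_lemma:
  fixes q Q0 p P0 e t d :: int
  assumes q: "q > 0" and Q: "Q0 > 0" and pe: "p*Q0 = q*P0 + e"
    and lo: "(d-1)*q*Q0 < t*e - q*(cl (t*P0) Q0 * Q0 - t*P0)"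
    and hi: "t*e - q*(cl (t*P0) Q0 * Q0 - t*P0) \<le> d*q*Q0"
  shows "cl (t*p) q = cl (t*P0) Q0 + d"
proof -
  define C where "C = cl (t*P0) Q0"
  have tp: "t*p*Q0 = t*q*P0 + t*e" using pe by (metis distrib_left mult.assoc)
  have "(C+d-1)*q*Q0 < t*p*Q0" using lo tp unfolding C_def[symmetric] by (simp add: algebra_simps)
  then have a: "(C+d-1)*q < t*p" using Q by (simp add: mult_less_cancel_right)
  have "t*p*Q0 \<le> (C+d)*q*Q0" using hi tp unfolding C_def[symmetric] by (simp add: algebra_simps)
  then have b: "t*p \<le> (C+d)*q" using Q by (simp add: mult_le_cancel_right)
  show ?thesis unfolding C_def[symmetric] using a b q by (intro cl_unique) (auto simp: algebra_simps)
qed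

locale cfw =
  fixes Q0 P0 u v :: int
  assumes Q0pos: "Q0 > 0" and u0: "0 < u" and uQ: "u < Q0" and uv: "u*P0 = 1 + v*Q0"
begin

abbreviation c where "c t \<equiv> cs P0 Q0 t"

lemma dvd_tP0: "Q0 dvd t * P0 \<Longrightarrow> Q0 dvd t"
proof -
  assume "Q0 dvd t * P0"
  then have "Q0 dvd t * P0 * u" by simp
  moreover have "t * P0 * u = t + (t*v) * Q0"
  proof -
    have "t*P0*u = t*(u*P0)" by (simp add: algebra_simps)
    also have "\<dots> = t*(1+v*Q0)" using uv by simp
    finally show ?thesis by (simp add: algebra_simps)
  qed
  ultimately have "Q0 dvd t + (t*v)*Q0" by simp
  then show "Q0 dvd t" by (simp add: dvd_add_left_iff)
qed

lemma clP0_shift: assumes "\<not> Q0 dvd t" shows "cl ((t + u) * P0) Q0 = cl (t*P0) Q0 + v"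
proof -
  have "(t+u)*P0 = (t*P0 + 1) + v*Q0" using uv by (simp add: algebra_simps)
  then have "cl ((t + u) * P0) Q0 = cl (t*P0 + 1) Q0 + v" using cl_add[OF Q0pos] by simp
  also have "cl (t*P0 + 1) Q0 = cl (t*P0) Q0" using cl_succ[OF Q0pos] dvd_tP0 assms by blast
  finally show ?thesis .
qed

lemma c_shift: assumes "\<not> Q0 dvd t" "\<not> Q0 dvd (t+1)" shows "c (t + u) = c t"
proof -
  have "cl ((t + u + 1) * P0) Q0 = cl ((t+1) * P0) Q0 + v"
    using clP0_shift[OF assms(2)] by (simp add: algebra_simps)
  then show ?thesis unfolding cs_def using clP0_shift[OF assms(1)] by simp
qed

lemma G_facts:
  fixes t :: int
  defines "C \<equiv> cl (t*P0) Q0"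
  shows "0 \<le> C*Q0 - t*P0" "C*Q0 - t*P0 < Q0" "t + (C*Q0 - t*P0)*u = Q0*(C*u - t*v)"
proof -
  show "0 \<le> C*Q0 - t*P0" "C*Q0 - t*P0 < Q0" using cl_bounds[OF Q0pos, of "t*P0"] unfolding C_def
    by (simp_all add: algebra_simps)
  show "t + (C*Q0 - t*P0)*u = Q0*(C*u - t*v)"
  proof -
    have "t + (C*Q0 - t*P0)*u = t + C*Q0*u - t*(u*P0)" by (simp add: algebra_simps)
    also have "\<dots> = t + C*Q0*u - t*(1 + v*Q0)" using uv by simp
    finally show ?thesis by (simp add: algebra_simps)
  qed
qed

definition Dv :: "int \<Rightarrow> int \<Rightarrow> int \<Rightarrow> int" where
  "Dv p q t = cl (t*p) q - cl (t*P0) Q0"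

lemma G_repr:
  fixes t :: int
  obtains G n where "0 \<le> G" "G < Q0" "t + G*u = Q0*n"
    "\<And>p q e d. q > 0 \<Longrightarrow> p*Q0 = q*P0 + e \<Longrightarrow> (d-1)*q*Q0 < t*e - q*G \<Longrightarrow>
       t*e - q*G \<le> d*q*Q0 \<Longrightarrow> Dv p q t = d"
proof -
  define G where "G = cl (t*P0) Q0 * Q0 - t*P0"
  show ?thesis
    by (rule that[of G "cl (t*P0) Q0 * u - t*v"]) (use G_facts[of t] D_lemma[OF _ Q0pos] in \<open>auto simp: G_def Dv_def\<close>)
qed

lemma even_win:
  assumes q: "q > 0" and pe: "p*Q0 = q*P0 + i" and i0: "i > 0"
    and A1: "(Q0-u)*i < q" and A2: "q \<le> (2*Q0-u)*i" and A3: "i \<le> q"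
  shows "\<And>t. u - 2*Q0 < t \<Longrightarrow> t < Q0 \<Longrightarrow> Dv p q t = 0"
    and "Dv p q (u - 2*Q0) = -1" and "Dv p q Q0 = 1"
proof -
  fix t :: int assume t1: "u - 2*Q0 < t" and t2: "t < Q0"
  define G where "G = cl (t*P0) Q0 * Q0 - t*P0"
  define n where "n = cl (t*P0) Q0 * u - t*v"
  have G: "0 \<le> G" "G < Q0" "t + G*u = Q0*n" using G_facts[of t] unfolding G_def n_def by auto
  have R: "\<And>d. (d-1)*q*Q0 < t*i - q*G \<Longrightarrow> t*i - q*G \<le> d*q*Q0 \<Longrightarrow> Dv p q t = d"
    using D_lemma[OF q Q0pos pe] unfolding Dv_def G_def by simp
  have qG: "q*G < q*Q0" using G q by simp
  have qG0: "0 \<le> q*G" using G q by simp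
  show "Dv p q t = 0"
  proof (cases "t \<ge> 0")
    case True
    have "G*u \<le> G*Q0" using G uQ by (intro mult_left_mono) auto
    then have "Q0*n < Q0*(1+G)" using G(3) t2 by (simp add: algebra_simps)
    then have "n < 1 + G" using Q0pos by (simp add: mult_less_cancel_left_pos)
    then have "Q0*n \<le> Q0*G" using Q0pos by (intro mult_left_mono) auto
    then have tle: "t \<le> G*(Q0-u)" using G(3) by (simp add: algebra_simps)
    have "t*i \<le> G*(Q0-u)*i" using tle i0 by (intro mult_right_mono) auto
    also have "\<dots> = G*((Q0-u)*i)" by simp
    also have "\<dots> \<le> G*q" using A1 G by (intro mult_left_mono) auto
    finally have up: "t*i - q*G \<le> 0" by (simp add: algebra_simps)
    have "t*i \<ge> 0" using True i0 by simp
    then have lo: "(0-1)*q*Q0 < t*i - q*G" using qG by simp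
    show ?thesis using R[OF lo] up by simp
  next
    case False
    define k where "k = Q0 - G"
    have k1: "k \<ge> 1" "k \<le> Q0" using G unfolding k_def by auto
    have e1: "Q0*(u - n) = -t + k*u" using G(3) unfolding k_def by (simp add: algebra_simps)
    have "(k-1)*u \<le> (k-1)*Q0" using k1 uQ by (intro mult_left_mono) auto
    then have "Q0*(u-n) < Q0*(k+1)" using e1 t1 by (simp add: algebra_simps)
    then have "u - n < k + 1" using Q0pos by (simp add: mult_less_cancel_left_pos)
    then have "Q0*(u-n) \<le> Q0*k" using Q0pos by (intro mult_left_mono) auto
    then have tle: "-t \<le> k*(Q0-u)" using e1 by (simp add: algebra_simps)
    have "(-t)*i \<le> k*(Q0-u)*i" using tle i0 by (intro mult_right_mono) auto
    also have "\<dots> = k*((Q0-u)*i)" by simp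
    also have "\<dots> < k*q" using A1 k1 by (intro mult_strict_left_mono) auto
    finally have "-(t*i) < q*(Q0 - G)" unfolding k_def by (simp add: algebra_simps)
    then have lo: "(0-1)*q*Q0 < t*i - q*G" by (simp add: algebra_simps)
    have "t*i \<le> 0" using False i0 by (simp add: mult_nonpos_nonneg)
    then have up: "t*i - q*G \<le> 0*q*Q0" using qG0 by simp
    show ?thesis using R[OF lo up] .
  qed
next
  let ?t = "u - 2*Q0"
  have C: "cl (?t*P0) Q0 = 1 + v - 2*P0"
  proof -
    have "?t*P0 = 1 + (v - 2*P0)*Q0" using uv by (simp add: algebra_simps)
    moreover have "cl 1 Q0 = 1" using Q0pos by (intro cl_unique) auto
    ultimately show ?thesis using cl_add[OF Q0pos, of 1 "v - 2*P0"] by simp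
  qed
  have G: "cl (?t*P0) Q0 * Q0 - ?t*P0 = Q0 - 1" unfolding C using uv by (simp add: algebra_simps)
  have "?t*i + q \<le> 0" using A2 by (simp add: algebra_simps)
  then have hi: "?t*i - q*(cl (?t*P0) Q0 * Q0 - ?t*P0) \<le> (-1)*q*Q0" unfolding G by (simp add: algebra_simps)
  have "Q0*i \<le> Q0*q" using A3 Q0pos by simp
  then have "(2*Q0-u)*i < q + Q0*q" using A1 by (simp add: algebra_simps)
  then have lo: "(-1-1)*q*Q0 < ?t*i - q*(cl (?t*P0) Q0 * Q0 - ?t*P0)" unfolding G by (simp add: algebra_simps)
  show "Dv p q ?t = -1" using D_lemma[OF q Q0pos pe lo hi] unfolding Dv_def by simp
next
  have C: "cl (Q0*P0) Q0 = P0" using cl_mult[OF Q0pos, of P0] by (simp add: mult.commute)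
  have "Q0*i \<le> q*Q0" using A3 Q0pos by (simp add: mult.commute)
  then have hi: "Q0*i - q*(cl (Q0*P0) Q0 * Q0 - Q0*P0) \<le> 1*q*Q0" unfolding C by simp
  have lo: "(1-1)*q*Q0 < Q0*i - q*(cl (Q0*P0) Q0 * Q0 - Q0*P0)" unfolding C using Q0pos i0 by simp
  show "Dv p q Q0 = 1" using D_lemma[OF q Q0pos pe lo hi] unfolding Dv_def by simp
qed

lemma odd_win:
  assumes q: "q > 0" and pe: "p*Q0 = q*P0 + (-i)" and i0: "i > 0"
    and B1: "u*i < q" and B2: "q \<le> (Q0+u)*i" and B3: "i \<le> q"
  shows "\<And>t. -Q0 < t \<Longrightarrow> t < Q0 + u \<Longrightarrow> Dv p q t = 0"
    and "Dv p q (-Q0) = 1" and "Dv p q (Q0 + u) = -1"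
proof -
  fix t :: int assume t1: "-Q0 < t" and t2: "t < Q0 + u"
  define G where "G = cl (t*P0) Q0 * Q0 - t*P0"
  define n where "n = cl (t*P0) Q0 * u - t*v"
  have G: "0 \<le> G" "G < Q0" "t + G*u = Q0*n" using G_facts[of t] unfolding G_def n_def by auto
  have R: "\<And>d. (d-1)*q*Q0 < t*(-i) - q*G \<Longrightarrow> t*(-i) - q*G \<le> d*q*Q0 \<Longrightarrow> Dv p q t = d"
    using D_lemma[OF q Q0pos pe] unfolding Dv_def G_def by simp
  have qG: "q*G < q*Q0" using G q by simp
  have qG0: "0 \<le> q*G" using G q by simp
  show "Dv p q t = 0"
  proof (cases "t \<ge> 0")
    case False
    have Gu0: "G*u \<ge> 0" using G u0 by simp
    have n0: "n \<ge> 0"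
    proof (rule ccontr)
      assume "\<not> n \<ge> 0"
      then have "Q0*n \<le> Q0*(-1)" using Q0pos by (intro mult_left_mono) auto
      then show False using G(3) Gu0 t1 by simp
    qed
    have "Q0*n \<ge> 0" using n0 Q0pos by simp
    then have tle: "-t \<le> G*u" using G(3) by simp
    have "(-t)*i \<le> G*u*i" using tle i0 by (intro mult_right_mono) auto
    also have "\<dots> = G*(u*i)" by simp
    also have "\<dots> \<le> G*q" using B1 G by (intro mult_left_mono) auto
    finally have up: "t*(-i) - q*G \<le> 0*q*Q0" by (simp add: algebra_simps)
    have "t*(-i) \<ge> 0" using False i0 by (simp add: mult_nonpos_nonneg)
    then have lo: "(0-1)*q*Q0 < t*(-i) - q*G" using qG by simp
    show ?thesis using R[OF lo up] .
  next
    case True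
    define k where "k = Q0 - G"
    have k1: "k \<ge> 1" "k \<le> Q0" using G unfolding k_def by auto
    have e1: "Q0*(n - u) = t - k*u" using G(3) unfolding k_def by (simp add: algebra_simps)
    have nu: "n - u \<le> 0"
    proof (rule ccontr)
      assume "\<not> n - u \<le> 0"
      then have "Q0*(n-u) \<ge> Q0*1" using Q0pos by (intro mult_left_mono) auto
      moreover have "k*u \<ge> 1*u" using k1 u0 by (intro mult_right_mono) auto
      ultimately show False using e1 t2 by simp
    qed
    have "Q0*(n-u) \<le> 0" using nu Q0pos by (simp add: mult_nonneg_nonpos)
    then have tle: "t \<le> k*u" using e1 by simp
    have "t*i \<le> k*u*i" using tle i0 by (intro mult_right_mono) auto
    also have "\<dots> = k*(u*i)" by simp
    also have "\<dots> < k*q" using B1 k1 by (intro mult_strict_left_mono) auto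
    finally have "t*i < q*(Q0 - G)" unfolding k_def by (simp add: algebra_simps)
    then have lo: "(0-1)*q*Q0 < t*(-i) - q*G" by (simp add: algebra_simps)
    have "t*i \<ge> 0" using True i0 by simp
    then have up: "t*(-i) - q*G \<le> 0*q*Q0" using qG0 by simp
    show ?thesis using R[OF lo up] .
  qed
next
  have C: "cl ((-Q0)*P0) Q0 = -P0" using cl_mult[OF Q0pos, of "-P0"] by (simp add: mult.commute)
  have "Q0*i \<le> q*Q0" using B3 Q0pos by (simp add: mult.commute)
  then have hi: "(-Q0)*(-i) - q*(cl ((-Q0)*P0) Q0 * Q0 - (-Q0)*P0) \<le> 1*q*Q0" unfolding C by simp
  have lo: "(1-1)*q*Q0 < (-Q0)*(-i) - q*(cl ((-Q0)*P0) Q0 * Q0 - (-Q0)*P0)" unfolding C using Q0pos i0 by simp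
  show "Dv p q (-Q0) = 1" using D_lemma[OF q Q0pos pe lo hi] unfolding Dv_def by simp
next
  let ?t = "Q0 + u"
  have C: "cl (?t*P0) Q0 = 1 + (P0 + v)"
  proof -
    have "?t*P0 = 1 + (P0 + v)*Q0" using uv by (simp add: algebra_simps)
    moreover have "cl 1 Q0 = 1" using Q0pos by (intro cl_unique) auto
    ultimately show ?thesis using cl_add[OF Q0pos, of 1 "P0 + v"] by simp
  qed
  have G: "cl (?t*P0) Q0 * Q0 - ?t*P0 = Q0 - 1" unfolding C using uv by (simp add: algebra_simps)
  have hi: "?t*(-i) - q*(cl (?t*P0) Q0 * Q0 - ?t*P0) \<le> (-1)*q*Q0" unfolding G using B2 by (simp add: algebra_simps)
  have "Q0*i \<le> Q0*q" using B3 Q0pos by simp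
  then have "(Q0+u)*i < q + Q0*q" using B1 by (simp add: algebra_simps)
  then have lo: "(-1-1)*q*Q0 < ?t*(-i) - q*(cl (?t*P0) Q0 * Q0 - ?t*P0)" unfolding G by (simp add: algebra_simps)
  show "Dv p q ?t = -1" using D_lemma[OF q Q0pos pe lo hi] unfolding Dv_def by simp
qed

end


lemma prefix_nth_iff: "prefix xs ys \<longleftrightarrow> length xs \<le> length ys \<and> (\<forall>i<length xs. xs!i = ys!i)"
proof
  assume "prefix xs ys"
  then obtain zs where "ys = xs @ zs" by (auto simp: prefix_def)
  then show "length xs \<le> length ys \<and> (\<forall>i<length xs. xs!i = ys!i)" by (auto simp: nth_append)
next
  assume h: "length xs \<le> length ys \<and> (\<forall>i<length xs. xs!i = ys!i)"
  have "take (length xs) ys = xs" using h by (intro nth_equalityI) auto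
  then have "ys = xs @ drop (length xs) ys" by (metis append_take_drop_id)
  then show "prefix xs ys" by (rule prefixI)
qed

lemma dvd01: "(Q::int) dvd x \<Longrightarrow> 0 \<le> x \<Longrightarrow> x \<le> Q \<Longrightarrow> x = 0 \<or> x = Q"
proof -
  assume "Q dvd x" "0 \<le> x" "x \<le> Q"
  then obtain k where k: "x = Q*k" by (auto simp: dvd_def)
  show "x = 0 \<or> x = Q"
  proof (cases "x = 0")
    case False
    then have Q0: "Q > 0" using \<open>0 \<le> x\<close> \<open>x \<le> Q\<close> by simp
    have "x > 0" using False \<open>0 \<le> x\<close> by simp
    then have "Q*k > 0" using k by simp
    then have "k > 0" using Q0 by (simp add: zero_less_mult_iff)
    moreover have "Q*k \<le> Q*1" using k \<open>x \<le> Q\<close> by simp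
    then have "k \<le> 1" using Q0 by (simp add: mult_le_cancel_left_pos)
    ultimately show ?thesis using k by simp
  qed simp
qed

context cfw
begin

definition CL where "CL = map (\<lambda>t. nat (c (int t))) [0..<2 * nat Q0]"

lemma c_mod_add: "c (x mod (2*Q0) + y) = c (x + y)"
proof -
  have e: "x mod (2*Q0) + y = (x + y) + (-(2*(x div (2*Q0))))*Q0"
    by (simp add: algebra_simps minus_div_mult_eq_mod[symmetric])
  show ?thesis unfolding e by (rule cs_period[OF Q0pos])
qed

lemma c_per: "c (x + k*Q0) = c x" using cs_period[OF Q0pos] by simp

lemma CL_len: "length CL = 2 * nat Q0" by (simp add: CL_def)

lemma rot_nth: assumes "l < 2 * nat Q0" shows "rotate k CL ! l = nat (c (int k + int l))"
proof -
  have "rotate k CL ! l = CL ! ((k + l) mod (2 * nat Q0))" using assms by (simp add: nth_rotate CL_len)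
  also have "\<dots> = nat (c (int ((k + l) mod (2 * nat Q0))))" using Q0pos by (simp add: CL_def)
  also have "int ((k + l) mod (2 * nat Q0)) = (int k + int l) mod (2*Q0)" using Q0pos
    by (simp add: of_nat_mod)
  also have "c ((int k + int l) mod (2*Q0)) = c (int k + int l)" using cs_mod[OF Q0pos] by simp
  finally show ?thesis .
qed

lemma prefix_rot: assumes "length W \<le> 2 * nat Q0"
  shows "prefix W (rotate k CL) \<longleftrightarrow> (\<forall>i<length W. W!i = nat (c (int k + int i)))"
  using assms by (auto simp: prefix_nth_iff CL_len rot_nth)

lemma mem_O:
  assumes "length W \<le> 2 * nat Q0" "\<forall>i<length W. W!i = nat (c (x + int i))"
  shows "nat (x mod (2*Q0)) \<in> {k. k < length CL \<and> prefix W (rotate k CL)}"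
proof -
  have a: "int (nat (x mod (2*Q0))) = x mod (2*Q0)" using Q0pos by simp
  have "nat (x mod (2*Q0)) < 2 * nat Q0" using Q0pos by (simp add: nat_less_iff)
  moreover have "\<forall>i<length W. W!i = nat (c (int (nat (x mod (2*Q0))) + int i))"
    using assms(2) unfolding a c_mod_add by simp
  ultimately show ?thesis using prefix_rot[OF assms(1)] by (simp add: CL_len)
qed

lemma kk_neq: assumes "0 < d" "d < 2*Q0" shows "nat ((x + d) mod (2*Q0)) \<noteq> nat (x mod (2*Q0))"
proof
  assume "nat ((x + d) mod (2*Q0)) = nat (x mod (2*Q0))"
  moreover have "0 \<le> (x+d) mod (2*Q0)" "0 \<le> x mod (2*Q0)" using Q0pos by simp_all
  ultimately have "(x + d) mod (2*Q0) = x mod (2*Q0)" by (simp add: eq_nat_nat_iff)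
  then have "2*Q0 dvd (x + d) - x" by (simp add: mod_eq_dvd_iff)
  then have "2*Q0 dvd d" by simp
  then show False using zdvd_imp_le[OF _ assms(1)] assms(2) by (meson not_less)
qed

lemma occ_unique:
  assumes occ: "cyc_occ CL W = 2" and len: "length W \<le> nat Q0"
    and Wn: "\<forall>i<length W. W!i = nat (c (n + int i))"
  shows "\<exists>l. 0 \<le> l \<and> l \<le> int (length W) \<and> Q0 dvd (n + l)"
    and "\<exists>l. 0 \<le> l \<and> l \<le> int (length W) \<and> Q0 dvd (n + l - u)"
proof -
  define Oc where "Oc = {k. k < length CL \<and> prefix W (rotate k CL)}"
  have cO: "card Oc = 2" using occ unfolding Oc_def cyc_occ_def by simp
  have fO: "finite Oc" unfolding Oc_def by simp
  have len2: "length W \<le> 2 * nat Q0" using len by simp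
  have m0: "nat (n mod (2*Q0)) \<in> Oc" using mem_O[OF len2, of n] Wn unfolding Oc_def by simp
  have "\<forall>i<length W. W!i = nat (c (n + Q0 + int i))" using Wn c_per[of "n + int _" 1]
    by (simp add: algebra_simps)
  then have m1: "nat ((n + Q0) mod (2*Q0)) \<in> Oc" using mem_O[OF len2, of "n + Q0"] unfolding Oc_def by simp
  have n01: "nat ((n + Q0) mod (2*Q0)) \<noteq> nat (n mod (2*Q0))" using kk_neq[of Q0 n] Q0pos by simp
  have three: "card {a, b, d} = 3 \<Longrightarrow> {a, b, d} \<subseteq> Oc \<Longrightarrow> False" for a b d
  proof -
    assume a: "card {a, b, d} = 3" "{a, b, d} \<subseteq> Oc"
    have "card {a, b, d} \<le> card Oc" by (rule card_mono[OF fO a(2)])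
    then show False using a(1) cO by simp
  qed
  show "\<exists>l. 0 \<le> l \<and> l \<le> int (length W) \<and> Q0 dvd (n + l)"
  proof (rule ccontr)
    assume H: "\<not> ?thesis"
    have "\<forall>i<length W. W!i = nat (c (n + u + int i))"
    proof (intro allI impI)
      fix i assume i: "i < length W"
      have "\<not> Q0 dvd (n + int i)"
      proof
        assume "Q0 dvd (n + int i)"
        then have "\<exists>l. 0 \<le> l \<and> l \<le> int (length W) \<and> Q0 dvd (n + l)" using i by (intro exI[of _ "int i"]) simp
        then show False using H by simp
      qed
      moreover have "\<not> Q0 dvd (n + int i + 1)"
      proof
        assume "Q0 dvd (n + int i + 1)"
        then have "\<exists>l. 0 \<le> l \<and> l \<le> int (length W) \<and> Q0 dvd (n + l)" using i
          by (intro exI[of _ "int i + 1"]) (simp add: algebra_simps)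
        then show False using H by simp
      qed
      ultimately have "c (n + int i + u) = c (n + int i)" by (rule c_shift)
      then show "W!i = nat (c (n + u + int i))" using Wn i by (simp add: algebra_simps)
    qed
    then have m2: "nat ((n + u) mod (2*Q0)) \<in> Oc" using mem_O[OF len2, of "n + u"] unfolding Oc_def by simp
    have "nat ((n + u) mod (2*Q0)) \<noteq> nat (n mod (2*Q0))" using kk_neq[of u n] u0 uQ by simp
    moreover have "nat ((n + u) mod (2*Q0)) \<noteq> nat ((n + Q0) mod (2*Q0))"
      using kk_neq[of "Q0 - u" "n + u"] u0 uQ by (simp add: algebra_simps)
    ultimately have "card {nat (n mod (2*Q0)), nat ((n + Q0) mod (2*Q0)), nat ((n + u) mod (2*Q0))} = 3"
      using n01 by simp
    then show False using three m0 m1 m2 by blast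
  qed
  show "\<exists>l. 0 \<le> l \<and> l \<le> int (length W) \<and> Q0 dvd (n + l - u)"
  proof (rule ccontr)
    assume H: "\<not> ?thesis"
    have "\<forall>i<length W. W!i = nat (c (n - u + int i))"
    proof (intro allI impI)
      fix i assume i: "i < length W"
      have "\<not> Q0 dvd (n - u + int i)"
      proof
        assume "Q0 dvd (n - u + int i)"
        then have "\<exists>l. 0 \<le> l \<and> l \<le> int (length W) \<and> Q0 dvd (n + l - u)" using i
          by (intro exI[of _ "int i"]) (simp add: algebra_simps)
        then show False using H by simp
      qed
      moreover have "\<not> Q0 dvd (n - u + int i + 1)"
      proof
        assume "Q0 dvd (n - u + int i + 1)"
        then have "\<exists>l. 0 \<le> l \<and> l \<le> int (length W) \<and> Q0 dvd (n + l - u)" using i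
          by (intro exI[of _ "int i + 1"]) (simp add: algebra_simps)
        then show False using H by simp
      qed
      ultimately have "c (n - u + int i + u) = c (n - u + int i)" by (rule c_shift)
      then show "W!i = nat (c (n - u + int i))" using Wn i by (simp add: algebra_simps)
    qed
    then have m2: "nat ((n - u) mod (2*Q0)) \<in> Oc" using mem_O[OF len2, of "n - u"] unfolding Oc_def by simp
    have "nat ((n - u + u) mod (2*Q0)) \<noteq> nat ((n - u) mod (2*Q0))" using kk_neq[of u "n - u"] u0 uQ by simp
    moreover have "nat ((n - u + (Q0 + u)) mod (2*Q0)) \<noteq> nat ((n - u) mod (2*Q0))"
      using kk_neq[of "Q0 + u" "n - u"] u0 uQ by simp
    ultimately have "card {nat (n mod (2*Q0)), nat ((n + Q0) mod (2*Q0)), nat ((n - u) mod (2*Q0))} = 3"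
      using n01 by (simp add: algebra_simps)
    then show False using three m0 m1 m2 by blast
  qed
qed

lemma decomp_det:
  assumes rot: "rotate n CL = S1 @ S2 @ S1 @ S2" and o1: "cyc_occ CL S1 = 2" and o2: "cyc_occ CL S2 = 2"
    and ne1: "S1 \<noteq> []" and ne2: "S2 \<noteq> []" and hd2: "hd S2 \<noteq> nat (c 0)"
  shows "length S1 = nat u" "length S2 = nat (Q0 - u)"
    "\<forall>i<length S1. S1!i = nat (c (int i))" "\<forall>i<length S2. S2!i = nat (c (u + int i))"
proof -
  define L1 where "L1 = length S1"
  define L2 where "L2 = length S2"
  have LL: "L1 + L2 = nat Q0" using arg_cong[OF rot, of length] unfolding L1_def L2_def
    by (simp add: CL_len)
  have S1n: "\<forall>i<L1. S1!i = nat (c (int n + int i))"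
  proof (intro allI impI)
    fix i assume "i < L1"
    then have "(S1 @ S2 @ S1 @ S2) ! i = S1 ! i" by (simp add: nth_append L1_def)
    moreover have "i < 2 * nat Q0" using \<open>i < L1\<close> LL by simp
    moreover have "rotate n CL ! i = nat (c (int n + int i))" by (rule rot_nth) fact
    ultimately show "S1!i = nat (c (int n + int i))" using rot by simp
  qed
  have S2n: "\<forall>i<L2. S2!i = nat (c ((int n + int L1) + int i))"
  proof (intro allI impI)
    fix i assume "i < L2"
    then have "(S1 @ S2 @ S1 @ S2) ! (L1 + i) = S2 ! i" by (simp add: nth_append L1_def L2_def)
    moreover have "L1 + i < 2 * nat Q0" using \<open>i < L2\<close> LL by simp
    moreover have "rotate n CL ! (L1 + i) = nat (c (int n + int (L1 + i)))" by (rule rot_nth) fact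
    ultimately show "S2!i = nat (c ((int n + int L1) + int i))" using rot by (simp add: algebra_simps)
  qed
  have l1: "length S1 \<le> nat Q0" "length S2 \<le> nat Q0" using LL unfolding L1_def L2_def by auto
  obtain la where la: "0 \<le> la" "la \<le> int L1" "Q0 dvd (int n + la)"
    using occ_unique(1)[OF o1 l1(1), of "int n"] S1n unfolding L1_def by blast
  obtain lb where lb: "0 \<le> lb" "lb \<le> int L1" "Q0 dvd (int n + lb - u)"
    using occ_unique(2)[OF o1 l1(1), of "int n"] S1n unfolding L1_def by blast
  obtain la' where la': "0 \<le> la'" "la' \<le> int L2" "Q0 dvd (int n + int L1 + la')"
    using occ_unique(1)[OF o2 l1(2), of "int n + int L1"] S2n unfolding L2_def by blast
  obtain lb' where lb': "0 \<le> lb'" "lb' \<le> int L2" "Q0 dvd (int n + int L1 + lb' - u)"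
    using occ_unique(2)[OF o2 l1(2), of "int n + int L1"] S2n unfolding L2_def by blast
  have LLi: "int L1 + int L2 = Q0" using LL Q0pos by linarith
  have L1pos: "L1 > 0" "L2 > 0" using ne1 ne2 unfolding L1_def L2_def by auto
  have "Q0 dvd (int n + int L1 + la') - (int n + la)" using la'(3) la(3) by (rule dvd_diff)
  then have "Q0 dvd (int L1 + la' - la)" by (simp add: algebra_simps)
  then have A: "int L1 + la' - la = 0 \<or> int L1 + la' - la = Q0"
    using la la' LLi by (intro dvd01) auto
  have A2: "int L1 + la' - la = Q0"
  proof (rule ccontr)
    assume "int L1 + la' - la \<noteq> Q0"
    then have "la' = 0" using A la la' by auto
    then have "Q0 dvd int n + int L1" using la'(3) by simp
    then obtain k where k: "int n + int L1 = Q0 * k" by (auto simp: dvd_def)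
    have "S2 ! 0 = nat (c (int n + int L1))" using S2n L1pos by simp
    also have "c (int n + int L1) = c (0 + k*Q0)" using k by (simp add: algebra_simps)
    also have "\<dots> = c 0" by (rule c_per)
    finally have "hd S2 = nat (c 0)" using ne2 by (simp add: hd_conv_nth)
    then show False using hd2 by simp
  qed
  then have la0: "la = 0" using la la' LLi by linarith
  then have nQ: "Q0 dvd int n" using la(3) by simp
  have "Q0 dvd (int n + int L1 + lb' - u) - (int n + lb - u)" using lb'(3) lb(3) by (rule dvd_diff)
  then have "Q0 dvd (int L1 + lb' - lb)" by (simp add: algebra_simps)
  then have B: "int L1 + lb' - lb = 0 \<or> int L1 + lb' - lb = Q0"
    using lb lb' LLi by (intro dvd01) auto
  have B2: "int L1 + lb' - lb = 0"
  proof (rule ccontr)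
    assume "int L1 + lb' - lb \<noteq> 0"
    then have "lb = 0" using B lb lb' LLi by auto
    then have nu: "Q0 dvd int n - u" using lb(3) by simp
    have "Q0 dvd int n - (int n - u)" using nQ nu by (rule dvd_diff)
    then have "Q0 dvd u" by simp
    then show False using zdvd_imp_le[OF _ u0] uQ by (meson not_less)
  qed
  then have "lb = int L1" using lb lb' by linarith
  then have "Q0 dvd int n + int L1 - u" using lb(3) by simp
  then have "Q0 dvd (int n + int L1 - u) - int n" using nQ by (rule dvd_diff)
  then have d1: "Q0 dvd int L1 - u" by simp
  have "int L1 - u = 0"
  proof (rule ccontr)
    assume ne: "int L1 - u \<noteq> 0"
    have "int L1 < Q0" using LLi L1pos by linarith
    then have "\<bar>int L1 - u\<bar> < Q0" using u0 uQ L1pos by linarith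
    moreover have "\<bar>Q0\<bar> \<le> \<bar>int L1 - u\<bar>" using dvd_imp_le_int[OF ne d1] .
    moreover have "\<bar>Q0\<bar> = Q0" using Q0pos by simp
    ultimately show False by simp
  qed
  then have L1u: "int L1 = u" by simp
  show "length S1 = nat u" using L1u unfolding L1_def by simp
  show "length S2 = nat (Q0 - u)" using L1u LLi unfolding L2_def L1_def by simp
  obtain k where k: "int n = Q0 * k" using nQ by (auto simp: dvd_def)
  show "\<forall>i<length S1. S1!i = nat (c (int i))"
  proof (intro allI impI)
    fix i assume "i < length S1"
    then have "S1!i = nat (c (int n + int i))" using S1n unfolding L1_def by simp
    also have "c (int n + int i) = c (int i + k*Q0)" using k by (simp add: algebra_simps)
    also have "\<dots> = c (int i)" by (rule c_per)
    finally show "S1!i = nat (c (int i))" .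
  qed
  show "\<forall>i<length S2. S2!i = nat (c (u + int i))"
  proof (intro allI impI)
    fix i assume "i < length S2"
    then have "S2!i = nat (c (int n + int L1 + int i))" using S2n unfolding L2_def by simp
    also have "c (int n + int L1 + int i) = c ((u + int i) + k*Q0)" using k L1u by (simp add: algebra_simps)
    also have "\<dots> = c (u + int i)" by (rule c_per)
    finally show "S2!i = nat (c (u + int i))" .
  qed
qed

end


lemma cs_mod_add: assumes "q > 0" shows "cs p q (x mod (2*q) + y) = cs p q (x + y)"
proof -
  have e: "x mod (2*q) + y = (x + y) + (-(2*(x div (2*q))))*q"
    by (simp add: algebra_simps minus_div_mult_eq_mod[symmetric])
  show ?thesis unfolding e by (rule cs_period[OF assms])
qed

lemma contains_win:
  assumes q: "q > 0" and CSs: "CSs = map (\<lambda>t. nat (cs p q (int t))) [0..<2 * nat q]"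
    and lenT: "int (length T) \<le> 2*q" and Tl: "\<forall>l<length T. T!l = nat (cs p q (t0 + int l))"
  shows "cyc_contains CSs T"
proof -
  define k where "k = nat (t0 mod (2*q))"
  have kk: "int k = t0 mod (2*q)" using q unfolding k_def by simp
  have lenC: "length CSs = 2 * nat q" using CSs by simp
  have "int (length CSs) = 2*q" using lenC q by simp
  then have "int (length T) \<le> int (length CSs)" using lenT by simp
  then have lTC: "length T \<le> length CSs" by (simp only: of_nat_le_iff)
  have "\<forall>l<length T. T!l = rotate k CSs ! l"
  proof (intro allI impI)
    fix l assume l: "l < length T"
    then have l2: "l < 2 * nat q" using lTC lenC by simp
    have "rotate k CSs ! l = CSs ! ((k + l) mod (2 * nat q))" using l2 by (simp add: nth_rotate lenC)
    also have "\<dots> = nat (cs p q (int ((k + l) mod (2 * nat q))))" using q CSs by simp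
    also have "int ((k + l) mod (2 * nat q)) = (int k + int l) mod (2*q)" using q by (simp add: of_nat_mod)
    also have "cs p q ((int k + int l) mod (2*q)) = cs p q (int k + int l)"
      using cs_mod[OF q] by simp
    also have "cs p q (int k + int l) = cs p q (t0 + int l)" unfolding kk by (rule cs_mod_add[OF q])
    finally show "T!l = rotate k CSs ! l" using Tl l by simp
  qed
  then have "prefix T (rotate k CSs)" using lTC by (simp add: prefix_nth_iff)
  then show ?thesis unfolding cyc_contains_def using lTC by blast
qed

lemma app_f:
  assumes "\<forall>i<length X. X!i = f (a + int i)" "\<forall>i<length Y. Y!i = f (a + int (length X) + int i)"
  shows "\<forall>i<length (X@Y). (X@Y)!i = f (a + int i)"
proof (intro allI impI)
  fix i assume "i < length (X@Y)"
  then show "(X@Y)!i = f (a + int i)" using assms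
    by (cases "i < length X") (auto simp: nth_append of_nat_diff algebra_simps)
qed

context cfw
begin

lemma Dv_cs: "cs p q t = c t + Dv p q (t+1) - Dv p q t"
  unfolding Dv_def cs_def by (simp add: algebra_simps)

lemma even_final:
  assumes S1l: "length S1 = nat u" and S1v: "\<forall>i<length S1. S1!i = nat (c (int i))"
    and S2l: "length S2 = nat (Q0-u)" and S2v: "\<forall>i<length S2. S2!i = nat (c (u + int i))"
    and q: "q > 0" and pe: "p*Q0 = q*P0 + i" and i0: "i > 0"
    and A1: "(Q0-u)*i < q" and A2: "q \<le> (2*Q0-u)*i" and A3: "i \<le> q"
    and qL: "3*Q0 - u \<le> 2*q"
    and CSs: "CSs = map (\<lambda>t. nat (cs p q (int t))) [0..<2*nat q]"
    and cpos: "\<And>t. c t \<ge> 1"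
    and S2e: "S2 = m # S2e" and S2b: "S2 = S2b @ [m]"
  shows "cyc_contains CSs ([m + 1] @ S2e @ S1 @ S2 @ S1 @ S2b @ [m + 1])"
proof -
  define f where "f = (\<lambda>x. nat (c x))"
  have iS1: "int (length S1) = u" using S1l u0 by simp
  have iS2: "int (length S2) = Q0 - u" using S2l uQ by simp
  have s1: "\<forall>j<length S1. S1!j = f (k*Q0 + int j)" for k
  proof (intro allI impI)
    fix j assume "j < length S1"
    then show "S1!j = f (k*Q0 + int j)" using S1v c_per[of "int j" k] unfolding f_def by (simp add: add.commute)
  qed
  have s2: "\<forall>j<length S2. S2!j = f (u + k*Q0 + int j)" for k
  proof (intro allI impI)
    fix j assume "j < length S2"
    then show "S2!j = f (u + k*Q0 + int j)" using S2v c_per[of "u + int j" k] unfolding f_def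
      by (simp add: algebra_simps)
  qed
  define W where "W = S2 @ S1 @ S2 @ S1 @ S2"
  have w4: "\<forall>j<length (S1 @ S2). (S1 @ S2)!j = f (2*Q0 + int j)"
    by (rule app_f) (use s1[of 2] s2[of 2] iS1 in \<open>simp_all add: algebra_simps\<close>)
  have w3: "\<forall>j<length (S2 @ S1 @ S2). (S2 @ S1 @ S2)!j = f ((u + Q0) + int j)"
    by (rule app_f) (use s2[of 1] w4 iS2 in \<open>simp_all add: algebra_simps\<close>)
  have w2: "\<forall>j<length (S1 @ S2 @ S1 @ S2). (S1 @ S2 @ S1 @ S2)!j = f (Q0 + int j)"
    by (rule app_f) (use s1[of 1] w3 iS1 in \<open>simp_all add: algebra_simps\<close>)
  have w1: "\<forall>j<length W. W!j = f (u + int j)" unfolding W_def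
    by (rule app_f) (use s2[of 0] w2 iS2 in \<open>simp_all add: algebra_simps\<close>)
  define X where "X = S2e @ S1 @ S2 @ S1 @ S2b"
  have WX: "W = m # X @ [m]" unfolding W_def X_def
    by (metis S2e S2b append_Cons append_assoc)
  define T where "T = [m + 1] @ S2e @ S1 @ S2 @ S1 @ S2b @ [m + 1]"
  have TX: "T = (m+1) # X @ [m+1]" unfolding T_def X_def by simp
  have lenW: "int (length W) = 3*Q0 - u" unfolding W_def using iS1 iS2 by simp
  have lenT: "length T = length W" using TX WX by simp
  define t0 where "t0 = u - 2*Q0"
  note ew = even_win[OF q pe i0 A1 A2 A3]
  have csl: "cs p q (t0 + int l) = c (u + int l) + Dv p q (t0 + int l + 1) - Dv p q (t0 + int l)" for l
  proof -
    have "c (t0 + int l) = c (u + int l + (-2)*Q0)" unfolding t0_def by (simp add: algebra_simps)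
    also have "\<dots> = c (u + int l)" by (rule c_per)
    finally show ?thesis using Dv_cs[of p q "t0 + int l"] by simp
  qed
  have Tl: "\<forall>l<length T. T!l = nat (cs p q (t0 + int l))"
  proof (intro allI impI)
    fix l assume l: "l < length T"
    have Wl: "W!l = nat (c (u + int l))" using w1 l lenT unfolding f_def by simp
    have cl1: "c (u + int l) \<ge> 1" by (rule cpos)
    show "T!l = nat (cs p q (t0 + int l))"
    proof (cases "l = 0")
      case True
      have "Dv p q t0 = -1" unfolding t0_def by (rule ew(2))
      moreover have "Dv p q (t0 + 1) = 0" unfolding t0_def using Q0pos uQ by (intro ew(1)) auto
      ultimately have "cs p q (t0 + int l) = c (u + int l) + 1" using csl[of l] True by simp
      moreover have "W!l = m" "T!l = m+1" using True WX TX by simp_all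
      ultimately show ?thesis using Wl cl1 by (simp add: nat_add_distrib)
    next
      case False
      show ?thesis
      proof (cases "l = length X + 1")
        case True
        have tl: "t0 + int l = Q0 - 1" using True lenW WX unfolding t0_def by simp
        have "Dv p q (t0 + int l + 1) = 1" unfolding tl using ew(3) by simp
        moreover have "Dv p q (t0 + int l) = 0" unfolding tl using Q0pos uQ by (intro ew(1)) auto
        ultimately have "cs p q (t0 + int l) = c (u + int l) + 1" using csl[of l] by simp
        moreover have "W!l = m" "T!l = m+1" using True WX TX by (simp_all add: nth_append)
        ultimately show ?thesis using Wl cl1 by (simp add: nat_add_distrib)
      next
        case False2: False
        have lX: "l \<le> length X" using l lenT WX False2 by simp
        have a1: "Dv p q (t0 + int l) = 0" unfolding t0_def using False lX lenW WX uQ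
          by (intro ew(1)) auto
        have a2: "Dv p q (t0 + int l + 1) = 0" unfolding t0_def using False lX lenW WX uQ
          by (intro ew(1)) auto
        have "cs p q (t0 + int l) = c (u + int l)" using csl[of l] a1 a2 by simp
        moreover have "T!l = W!l" using False lX WX TX
          by (cases l) (auto simp: nth_append)
        ultimately show ?thesis using Wl by simp
      qed
    qed
  qed
  have "int (length T) \<le> 2*q" using lenT lenW qL by simp
  then show ?thesis using contains_win[OF q CSs _ Tl] unfolding T_def by simp
qed

lemma odd_final:
  assumes S1l: "length S1 = nat u" and S1v: "\<forall>i<length S1. S1!i = nat (c (int i))"
    and S2l: "length S2 = nat (Q0-u)" and S2v: "\<forall>i<length S2. S2!i = nat (c (u + int i))"
    and q: "q > 0" and pe: "p*Q0 = q*P0 + (-i)" and i0: "i > 0"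
    and B1: "u*i < q" and B2: "q \<le> (Q0+u)*i" and B3: "i \<le> q"
    and qL: "2*Q0 + u \<le> 2*q"
    and CSs: "CSs = map (\<lambda>t. nat (cs p q (int t))) [0..<2*nat q]"
    and cpos: "\<And>t. c t \<ge> 1"
    and S1e: "S1 = (m+1) # S1e" and S1b: "S1 = S1b @ [m+1]"
  shows "cyc_contains CSs ([m] @ S1e @ S2 @ S1 @ S2 @ S1b @ [m])"
proof -
  define f where "f = (\<lambda>x. nat (c x))"
  have iS1: "int (length S1) = u" using S1l u0 by simp
  have iS2: "int (length S2) = Q0 - u" using S2l uQ by simp
  have s1: "\<forall>j<length S1. S1!j = f (k*Q0 + int j)" for k
  proof (intro allI impI)
    fix j assume "j < length S1"
    then show "S1!j = f (k*Q0 + int j)" using S1v c_per[of "int j" k] unfolding f_def by (simp add: add.commute)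
  qed
  have s2: "\<forall>j<length S2. S2!j = f (u + k*Q0 + int j)" for k
  proof (intro allI impI)
    fix j assume "j < length S2"
    then show "S2!j = f (u + k*Q0 + int j)" using S2v c_per[of "u + int j" k] unfolding f_def
      by (simp add: algebra_simps)
  qed
  define W where "W = S1 @ S2 @ S1 @ S2 @ S1"
  have w4: "\<forall>j<length (S2 @ S1). (S2 @ S1)!j = f ((u + Q0) + int j)"
    by (rule app_f) (use s2[of 1] s1[of 2] iS2 in \<open>simp_all add: algebra_simps\<close>)
  have w3: "\<forall>j<length (S1 @ S2 @ S1). (S1 @ S2 @ S1)!j = f (Q0 + int j)"
    by (rule app_f) (use s1[of 1] w4 iS1 in \<open>simp_all add: algebra_simps\<close>)
  have w2: "\<forall>j<length (S2 @ S1 @ S2 @ S1). (S2 @ S1 @ S2 @ S1)!j = f (u + int j)"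
    by (rule app_f) (use s2[of 0] w3 iS2 in \<open>simp_all add: algebra_simps\<close>)
  have w1: "\<forall>j<length W. W!j = f (0 + int j)" unfolding W_def
    by (rule app_f) (use s1[of 0] w2 iS1 in \<open>simp_all add: algebra_simps\<close>)
  define Y where "Y = S1e @ S2 @ S1 @ S2 @ S1b"
  have WY: "W = (m+1) # Y @ [m+1]" unfolding W_def Y_def
    by (metis S1e S1b append_Cons append_assoc)
  define T where "T = [m] @ S1e @ S2 @ S1 @ S2 @ S1b @ [m]"
  have TY: "T = m # Y @ [m]" unfolding T_def Y_def by simp
  have lenW: "int (length W) = 2*Q0 + u" unfolding W_def using iS1 iS2 by simp
  have lenT: "length T = length W" using TY WY by simp
  define t0 where "t0 = - Q0"
  note ow = odd_win[OF q pe i0 B1 B2 B3]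
  have csl: "cs p q (t0 + int l) = c (int l) + Dv p q (t0 + int l + 1) - Dv p q (t0 + int l)" for l
  proof -
    have "c (t0 + int l) = c (int l + (-1)*Q0)" unfolding t0_def by (simp add: algebra_simps)
    also have "\<dots> = c (int l)" by (rule c_per)
    finally show ?thesis using Dv_cs[of p q "t0 + int l"] by simp
  qed
  have Tl: "\<forall>l<length T. T!l = nat (cs p q (t0 + int l))"
  proof (intro allI impI)
    fix l assume l: "l < length T"
    have Wl: "W!l = nat (c (int l))" using w1 l lenT unfolding f_def by simp
    have cl1: "c (int l) \<ge> 1" by (rule cpos)
    show "T!l = nat (cs p q (t0 + int l))"
    proof (cases "l = 0")
      case True
      have "Dv p q t0 = 1" unfolding t0_def by (rule ow(2))
      moreover have "Dv p q (t0 + 1) = 0" unfolding t0_def using Q0pos u0 by (intro ow(1)) auto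
      ultimately have "cs p q (t0 + int l) = c (int l) - 1" using csl[of l] True by simp
      moreover have "W!l = m+1" "T!l = m" using True WY TY by simp_all
      ultimately show ?thesis using Wl cl1 by (simp add: nat_diff_distrib)
    next
      case False
      show ?thesis
      proof (cases "l = length Y + 1")
        case True
        have tl: "t0 + int l = Q0 + u - 1" using True lenW WY unfolding t0_def by simp
        have "Dv p q (t0 + int l + 1) = -1" unfolding tl using ow(3) by simp
        moreover have "Dv p q (t0 + int l) = 0" unfolding tl using Q0pos u0 by (intro ow(1)) auto
        ultimately have "cs p q (t0 + int l) = c (int l) - 1" using csl[of l] by simp
        moreover have "W!l = m+1" "T!l = m" using True WY TY by (simp_all add: nth_append)
        ultimately show ?thesis using Wl cl1 by (simp add: nat_diff_distrib)
      next
        case False2: False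
        have lY: "l \<le> length Y" using l lenT WY False2 by simp
        have a1: "Dv p q (t0 + int l) = 0" unfolding t0_def using False lY lenW WY u0
          by (intro ow(1)) auto
        have a2: "Dv p q (t0 + int l + 1) = 0" unfolding t0_def using False lY lenW WY u0
          by (intro ow(1)) auto
        have "cs p q (t0 + int l) = c (int l)" using csl[of l] a1 a2 by simp
        moreover have "T!l = W!l" using False lY WY TY
          by (cases l) (auto simp: nth_append)
        ultimately show ?thesis using Wl by simp
      qed
    qed
  qed
  have "int (length T) \<le> 2*q" using lenT lenW qL by simp
  then show ?thesis using contains_win[OF q CSs _ Tl] unfolding T_def by simp
qed

end


lemma frac_less_int: assumes "b > 0" "d > 0"
  shows "(of_int a / of_int b < (of_int c / of_int d :: rat)) = (a*d < c*b)"
proof -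
  have "(of_int a / of_int b < (of_int c / of_int d :: rat)) = (of_int a * of_int d < (of_int c * of_int b :: rat))"
    using assms by (simp add: divide_less_eq less_divide_eq field_simps)
  also have "\<dots> = (a*d < c*b)" by (metis of_int_less_iff of_int_mult)
  finally show ?thesis .
qed

lemma frac_le_int: assumes "b > 0" "d > 0"
  shows "(of_int a / of_int b \<le> (of_int c / of_int d :: rat)) = (a*d \<le> c*b)"
  using frac_less_int[OF assms(2,1), of c a] by (simp add: not_less[symmetric])

lemma quotient_of_int_frac: assumes "P > 0" "coprime Q P"
  shows "quotient_of (of_int Q / of_int P) = (Q, P)"
  using assms by (simp add: Fract_of_int_quotient[symmetric] quotient_of_Fract)

lemma pos_den: "0 < (of_int a / of_int b :: rat) \<Longrightarrow> a > 0 \<Longrightarrow> b > 0"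
  by (simp add: zero_less_divide_iff)

theorem lemma2p4:
  fixes r s :: rat and ms S1 S2 :: "nat list"
  assumes "0 < r" and "r < 1"
    and "\<forall>p::int. p \<ge> 2 \<longrightarrow> r \<noteq> 1 / of_int p"
    and "length ms \<ge> 2" and "\<forall>x\<in>set ms. x > 0" and "last ms \<ge> 2"
    and "r = cf ms"
    and "CS_decomp (CS r) (hd ms) S1 S2"
  shows "(even (length ms) \<and>
           cf (butlast ms @ [last ms - 1]) < s \<and> s \<le> cf (butlast ms @ [last ms - 1, 2]) \<longrightarrow>
           (\<forall>S2e S2b. S2 = hd ms # S2e \<and> S2 = S2b @ [hd ms] \<longrightarrow>
              cyc_contains (CS s) ([hd ms + 1] @ S2e @ S1 @ S2 @ S1 @ S2b @ [hd ms + 1])))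
       \<and> (odd (length ms) \<and>
           cf (butlast ms @ [last ms - 1, 2]) \<le> s \<and> s < cf (butlast ms @ [last ms - 1]) \<longrightarrow>
           (\<forall>S1e S1b. S1 = (hd ms + 1) # S1e \<and> S1 = S1b @ [hd ms + 1] \<longrightarrow>
              cyc_contains (CS s) ([hd ms] @ S1e @ S2 @ S1 @ S2 @ S1b @ [hd ms])))"
proof -
  obtain Q0 P0 u v :: int where
    P1: "cf ms = of_int Q0 / of_int P0" and P2: "P0 > 0" and P3: "Q0 > 0" and P4: "coprime Q0 P0"
    and P5: "0 < u" and P6: "u < Q0" and P7: "u*P0 = 1 + v*Q0"
    and P8: "int (hd ms) * Q0 < P0" and P9: "P0 < (int (hd ms) + 1) * Q0"
    and Pev: "even (length ms) \<Longrightarrow> cf (butlast ms @ [last ms - 1]) = of_int (Q0-u) / of_int (P0-v) \<and>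
        cf (butlast ms @ [last ms - 1, 2]) = of_int (2*Q0-u) / of_int (2*P0-v)"
    and Pod: "odd (length ms) \<Longrightarrow> cf (butlast ms @ [last ms - 1]) = of_int u / of_int v \<and>
        cf (butlast ms @ [last ms - 1, 2]) = of_int (Q0+u) / of_int (P0+v)"
    using cf_param[OF assms(4,5,6)] by blast
  interpret cfw Q0 P0 u v using P3 P5 P6 P7 by unfold_locales auto
  define m where "m = hd ms"
  have "ms \<noteq> []" using assms(4) by auto
  then have "hd ms \<in> set ms" by simp
  then have m1: "m \<ge> 1" using assms(5) unfolding m_def by auto
  have rq: "quotient_of r = (Q0, P0)" using assms(7) P1 quotient_of_int_frac[OF P2 P4] by simp
  have CSr: "CS r = CL" unfolding CL_def using CS_formula[OF rq assms(1,2)] .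
  have QP: "Q0 < P0"
  proof -
    have "Q0 \<le> int m * Q0" using m1 P3 by simp
    then show ?thesis using P8 unfolding m_def by simp
  qed
  have cpos: "\<And>t. c t \<ge> 1" using cs_pos[OF P3 QP] .
  have c0: "c 0 = int m + 1"
  proof -
    have "cl P0 Q0 = int m + 1" using P8 P9 P3 unfolding m_def by (intro cl_unique) (auto simp: algebra_simps)
    then show ?thesis unfolding cs_def by (simp add: cl_def)
  qed
  from assms(8) obtain n where rot: "rotate n (CS r) = S1 @ S2 @ S1 @ S2"
    and pal: "cyc_occ (CS r) S1 = 2" "cyc_occ (CS r) S2 = 2"
    and ne1: "S1 \<noteq> []" and h1: "hd S1 = m + 1" and ne2: "S2 \<noteq> []" and h2: "hd S2 = m"
    unfolding CS_decomp_def m_def by blast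
  have hd2: "hd S2 \<noteq> nat (c 0)" using h2 c0 by simp
  note dd = decomp_det[OF rot[unfolded CSr] pal[unfolded CSr] ne1 ne2 hd2]
  have c1pos: "\<forall>x\<in>set (butlast ms @ [last ms - 1]). x > 0"
    using assms(5,6) by (auto dest: in_set_butlastD)
  have c2pos: "\<forall>x\<in>set (butlast ms @ [last ms - 1, 2]). x > 0"
    using assms(5,6) by (auto dest: in_set_butlastD)
  have A0: "0 < cf (butlast ms @ [last ms - 1])" "cf (butlast ms @ [last ms - 1]) \<le> 1"
    using cf_pos_le1[OF _ c1pos] by auto
  have M0: "0 < cf (butlast ms @ [last ms - 1, 2])" "cf (butlast ms @ [last ms - 1, 2]) < 1"
    using cf_pos_le1[OF _ c2pos] cf_lt1[OF _ c2pos] by auto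
  obtain q p where qs: "quotient_of s = (q, p)" by (cases "quotient_of s") auto
  have p0: "p > 0" using quotient_of_denom_pos[OF qs] .
  have sqp: "s = of_int q / of_int p" using quotient_of_div[OF qs] .
  show ?thesis
  proof (intro conjI impI allI)
    fix S2e S2b
    assume H: "even (length ms) \<and> cf (butlast ms @ [last ms - 1]) < s \<and> s \<le> cf (butlast ms @ [last ms - 1, 2])"
      and S: "S2 = hd ms # S2e \<and> S2 = S2b @ [hd ms]"
    have e1: "cf (butlast ms @ [last ms - 1]) = of_int (Q0-u) / of_int (P0-v)"
      and e2: "cf (butlast ms @ [last ms - 1, 2]) = of_int (2*Q0-u) / of_int (2*P0-v)" using Pev H by auto
    have s0: "0 < s" "s < 1" using H A0 M0 by auto
    have q0: "q > 0" using s0 p0 by (simp add: sqp zero_less_divide_iff)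
    have d1: "P0 - v > 0" using pos_den[OF A0(1)[unfolded e1]] P6 by simp
    have d2: "2*P0 - v > 0" using pos_den[OF M0(1)[unfolded e2]] P6 P3 by simp
    define i where "i = Q0*p - P0*q"
    define j where "j = (P0 - v)*q - (Q0 - u)*p"
    have "of_int (Q0-u) / of_int (P0-v) < (of_int q / of_int p :: rat)" using H unfolding e1 sqp by blast
    then have "(Q0-u)*p < q*(P0-v)" by (simp only: frac_less_int[OF d1 p0])
    then have j0: "j > 0" unfolding j_def by (simp add: algebra_simps)
    have "(of_int q / of_int p :: rat) \<le> of_int (2*Q0-u) / of_int (2*P0-v)" using H unfolding e2 sqp by blast
    then have "q*(2*P0-v) \<le> (2*Q0-u)*p" by (simp only: frac_le_int[OF p0 d2])
    then have ji: "j \<le> i" unfolding i_def j_def by (simp add: algebra_simps)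
    have qrep: "q = i*(Q0-u) + j*Q0"
    proof -
      have "i*(Q0-u) + j*Q0 = q*(u*P0 - v*Q0)" unfolding i_def j_def by (simp add: algebra_simps)
      then show ?thesis using P7 by simp
    qed
    have pe: "p*Q0 = q*P0 + i" unfolding i_def by (simp add: algebra_simps)
    have i0: "i > 0" using j0 ji by simp
    have jQ: "j*Q0 > 0" using j0 P3 by simp
    have A1: "(Q0-u)*i < q" using qrep jQ by (simp add: algebra_simps)
    have "j*Q0 \<le> i*Q0" using ji P3 by (simp add: mult_right_mono)
    then have A2: "q \<le> (2*Q0-u)*i" using qrep by (simp add: algebra_simps)
    have "i*1 \<le> i*(Q0-u)" using i0 P6 by (intro mult_left_mono) auto
    then have A3: "i \<le> q" using qrep jQ by linarith
    have f1: "(Q0-u) \<le> i*(Q0-u)" using mult_right_mono[of 1 i "Q0-u"] i0 P6 by simp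
    have f2: "Q0 \<le> j*Q0" using mult_right_mono[of 1 j Q0] j0 P3 by simp
    have qL: "3*Q0 - u \<le> 2*q" using f1 f2 qrep P6 by linarith
    have CSs: "CS s = map (\<lambda>t. nat (cs p q (int t))) [0..<2*nat q]" using CS_formula[OF qs s0] .
    have "cyc_contains (CS s) ([m + 1] @ S2e @ S1 @ S2 @ S1 @ S2b @ [m + 1])"
    proof -
      have Sa: "S2 = m # S2e" using S unfolding m_def by blast
      have Sb: "S2 = S2b @ [m]" using S unfolding m_def by blast
      show ?thesis by (rule even_final[OF dd(1,3,2,4) q0 pe i0 A1 A2 A3 qL CSs cpos Sa Sb])
    qed
    then show "cyc_contains (CS s) ([hd ms + 1] @ S2e @ S1 @ S2 @ S1 @ S2b @ [hd ms + 1])"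
      unfolding m_def .
  next
    fix S1e S1b
    assume H: "odd (length ms) \<and> cf (butlast ms @ [last ms - 1, 2]) \<le> s \<and> s < cf (butlast ms @ [last ms - 1])"
      and S: "S1 = (hd ms + 1) # S1e \<and> S1 = S1b @ [hd ms + 1]"
    have e1: "cf (butlast ms @ [last ms - 1]) = of_int u / of_int v"
      and e2: "cf (butlast ms @ [last ms - 1, 2]) = of_int (Q0+u) / of_int (P0+v)" using Pod H by auto
    have s0: "0 < s" "s < 1" using H A0 M0 by auto
    have q0: "q > 0" using s0 p0 by (simp add: sqp zero_less_divide_iff)
    have d1: "v > 0" using pos_den[OF A0(1)[unfolded e1]] P5 by simp
    have d2: "P0 + v > 0" using d1 P2 by simp
    define i where "i = P0*q - Q0*p"
    define j where "j = u*p - v*q"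
    have "(of_int q / of_int p :: rat) < of_int u / of_int v" using H unfolding e1 sqp by blast
    then have "q*v < u*p" by (simp only: frac_less_int[OF p0 d1])
    then have j0: "j > 0" unfolding j_def by (simp add: algebra_simps)
    have "of_int (Q0+u) / of_int (P0+v) \<le> (of_int q / of_int p :: rat)" using H unfolding e2 sqp by blast
    then have "(Q0+u)*p \<le> q*(P0+v)" by (simp only: frac_le_int[OF d2 p0])
    then have ji: "j \<le> i" unfolding i_def j_def by (simp add: algebra_simps)
    have qrep: "q = i*u + j*Q0"
    proof -
      have "i*u + j*Q0 = q*(u*P0 - v*Q0)" unfolding i_def j_def by (simp add: algebra_simps)
      then show ?thesis using P7 by simp
    qed
    have pe: "p*Q0 = q*P0 + (-i)" unfolding i_def by (simp add: algebra_simps)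
    have i0: "i > 0" using j0 ji by simp
    have jQ: "j*Q0 > 0" using j0 P3 by simp
    have B1: "u*i < q" using qrep jQ by (simp add: algebra_simps)
    have "j*Q0 \<le> i*Q0" using ji P3 by (simp add: mult_right_mono)
    then have B2: "q \<le> (Q0+u)*i" using qrep by (simp add: algebra_simps)
    have "i*1 \<le> i*u" using i0 P5 by (intro mult_left_mono) auto
    then have B3: "i \<le> q" using qrep jQ by linarith
    have f1: "u \<le> i*u" using mult_right_mono[of 1 i u] i0 P5 by simp
    have f2: "Q0 \<le> j*Q0" using mult_right_mono[of 1 j Q0] j0 P3 by simp
    have qL: "2*Q0 + u \<le> 2*q" using f1 f2 qrep P5 by linarith
    have CSs: "CS s = map (\<lambda>t. nat (cs p q (int t))) [0..<2*nat q]" using CS_formula[OF qs s0] .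
    have "cyc_contains (CS s) ([m] @ S1e @ S2 @ S1 @ S2 @ S1b @ [m])"
    proof -
      have Sa: "S1 = (m+1) # S1e" using S unfolding m_def by blast
      have Sb: "S1 = S1b @ [m+1]" using S unfolding m_def by blast
      show ?thesis by (rule odd_final[OF dd(1,3,2,4) q0 pe i0 B1 B2 B3 qL CSs cpos Sa Sb])
    qed
    then show "cyc_contains (CS s) ([hd ms] @ S1e @ S2 @ S1 @ S2 @ S1b @ [hd ms])"
      unfolding m_def .
  qed
qed


end
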